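(* Let $K$ be an alphabet space and $\sigma:K\to K^+$ a generalized substitution on $K$. Then the induced map $\sigma:K^{\mathbb Z}\to K^{\mathbb Z}$ is continuous.
   Context: An alphabet space is a compact zero-dimensional metric space $K$ with at least two points; $K^+$ is the set of nonempty finite words over $K$, and $K^{\mathbb Z}$ carries the product topology. A generalized substitution is a map $\sigma:K\to K^+$ such that $a\mapsto|\sigma(a)|$ is continuous and, for each $j$, $a\mapsto$ ($j$-th letter of $\sigma(a)$) is continuous on $\{a:|\sigma(a)|\ge j\}$. Its extension to $K^{\mathbb Z}$ is $\sigma(\ldots x_{-2}x_{-1}.x_0x_1\ldots)=\ldots\sigma(x_{-2})\sigma(x_{-1}).\sigma(x_0)\sigma(x_1)\ldots$, with $\sigma(x_0)$ starting at coordinate $0$. *)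

theory Defs
  imports "HOL-Analysis.Analysis"
begin

definition zero_dimensional :: "'a::metric_space set \<Rightarrow> bool" where
  "zero_dimensional K \<longleftrightarrow>
     (\<forall>x\<in>K. \<forall>U. open U \<and> x \<in> U \<longrightarrow>
        (\<exists>C. openin (top_of_set K) C \<and> closedin (top_of_set K) C \<and> x \<in> C \<and> C \<subseteq> U \<inter> K))"

definition alphabet_space :: "'a::metric_space set \<Rightarrow> bool" where
  "alphabet_space K \<longleftrightarrow> compact K \<and> zero_dimensional K \<and> (\<exists>a\<in>K. \<exists>b\<in>K. a \<noteq> b)"

text \<open>Generalized substitution sigma : K -> K^+ (nonempty finite words over K), with
  continuous length map and continuous j-th letter maps (0-indexed here).\<close>
definition gen_substitution :: "'a::metric_space set \<Rightarrow> ('a \<Rightarrow> 'a list) \<Rightarrow> bool" where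
  "gen_substitution K \<sigma> \<longleftrightarrow>
     (\<forall>a\<in>K. \<sigma> a \<noteq> [] \<and> set (\<sigma> a) \<subseteq> K) \<and>
     continuous_on K (\<lambda>a. length (\<sigma> a)) \<and>
     (\<forall>j::nat. continuous_on {a\<in>K. j < length (\<sigma> a)} (\<lambda>a. \<sigma> a ! j))"

text \<open>Starting coordinate of the block sigma(x_k) in sigma(x); block sigma(x_0) starts at 0.\<close>
definition block_start :: "('a \<Rightarrow> 'a list) \<Rightarrow> (int \<Rightarrow> 'a) \<Rightarrow> int \<Rightarrow> int" where
  "block_start \<sigma> x k =
     (if 0 \<le> k then (\<Sum>i\<in>{0..<k}. int (length (\<sigma> (x i))))
      else - (\<Sum>i\<in>{k..<0}. int (length (\<sigma> (x i)))))"

definition subst_ext :: "('a \<Rightarrow> 'a list) \<Rightarrow> (int \<Rightarrow> 'a) \<Rightarrow> (int \<Rightarrow> 'a)" where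
  "subst_ext \<sigma> x n =
     (let k = (THE k. block_start \<sigma> x k \<le> n \<and> n < block_start \<sigma> x (k + 1))
      in \<sigma> (x k) ! nat (n - block_start \<sigma> x k))"

definition full_shift_top :: "'a::metric_space set \<Rightarrow> (int \<Rightarrow> 'a) topology" where
  "full_shift_top K = product_topology (\<lambda>_. top_of_set K) UNIV"

end

theory Submission
  imports Defs
begin
lemma bs_step: "block_start \<sigma> x (k+1) = block_start \<sigma> x k + int (length (\<sigma> (x k)))"
proof (cases "k \<ge> 0")
  case True
  have "{0..<k+1} = insert k {0..<k}" using True by auto
  then show ?thesis using True by (simp add: block_start_def)
next
  case False
  show ?thesis
  proof (cases "k = -1")
    case True
    have "{-1..<0::int} = {-1}" by auto
    then show ?thesis using True by (simp add: block_start_def)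
  next
    case F: False
    have "{k..<0} = insert k {k+1..<0}" using False F by auto
    then show ?thesis using False F by (simp add: block_start_def)
  qed
qed

lemma bs_mono_aux:
  assumes ne: "\<forall>i. \<sigma> (x i) \<noteq> []"
  shows "block_start \<sigma> x a + int d \<le> block_start \<sigma> x (a + int d)"
proof (induction d)
  case 0 then show ?case by simp
next
  case (Suc d)
  have "block_start \<sigma> x (a + int (Suc d)) = block_start \<sigma> x (a + int d) + int (length (\<sigma> (x (a + int d))))"
    using bs_step[of \<sigma> x "a + int d"] by (simp add: algebra_simps)
  moreover have "length (\<sigma> (x (a + int d))) \<ge> 1" using ne by (metis One_nat_def Suc_leI length_greater_0_conv)
  ultimately show ?case using Suc by simp
qed

lemma bs_mono:
  assumes ne: "\<forall>i. \<sigma> (x i) \<noteq> []" and "a \<le> b"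
  shows "block_start \<sigma> x a + (b - a) \<le> block_start \<sigma> x b"
  using bs_mono_aux[OF ne, of a "nat (b - a)"] assms(2) by simp

lemma bs_zero: "block_start \<sigma> x 0 = 0" by (simp add: block_start_def)

lemma bs_unique:
  assumes ne: "\<forall>i. \<sigma> (x i) \<noteq> []"
    and "block_start \<sigma> x k \<le> n" "n < block_start \<sigma> x (k+1)"
    and "block_start \<sigma> x k' \<le> n" "n < block_start \<sigma> x (k'+1)"
  shows "k = k'"
proof (rule ccontr)
  assume "k \<noteq> k'"
  then consider "k + 1 \<le> k'" | "k' + 1 \<le> k" by linarith
  then show False
  proof cases
    case 1 then show False using bs_mono[OF ne 1] assms by linarith
  next
    case 2 then show False using bs_mono[OF ne 2] assms by linarith
  qed
qed

lemma bs_exists: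
  assumes ne: "\<forall>i. \<sigma> (x i) \<noteq> []"
  shows "\<exists>k. block_start \<sigma> x k \<le> n \<and> n < block_start \<sigma> x (k+1)"
proof -
  define B where "B = block_start \<sigma> x"
  define S where "S = {k \<in> {min n 0..max n 0}. B k \<le> n}"
  have fin: "finite S" unfolding S_def by (rule finite_subset[of _ "{min n 0..max n 0}"]) auto
  have "min n 0 \<in> S"
    using bs_mono[OF ne, of "min n 0" 0] bs_zero[of \<sigma> x] unfolding S_def B_def by auto
  then have ne2: "S \<noteq> {}" by auto
  define m where "m = Max S"
  have mS: "m \<in> S" using fin ne2 m_def by simp
  have "n < B (m+1)"
  proof (rule ccontr)
    assume c: "\<not> n < B (m+1)"
    show False
    proof (cases "m + 1 \<le> max n 0")
      case True
      then have "m+1 \<in> S" using c mS unfolding S_def by auto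
      then have "m + 1 \<le> m" using fin m_def Max_ge by blast
      then show False by simp
    next
      case False
      then have "0 \<le> m + 1" by simp
      then have "B 0 + (m + 1 - 0) \<le> B (m+1)" using bs_mono[OF ne, of 0 "m+1"] B_def by simp
      then show False using c False bs_zero[of \<sigma> x] B_def by simp
    qed
  qed
  then show ?thesis using mS unfolding S_def B_def by auto
qed

lemma subst_eq:
  assumes ne: "\<forall>i. \<sigma> (y i) \<noteq> []"
    and "block_start \<sigma> y k \<le> n" "n < block_start \<sigma> y (k+1)"
  shows "subst_ext \<sigma> y n = \<sigma> (y k) ! nat (n - block_start \<sigma> y k)"
proof -
  have "(THE k. block_start \<sigma> y k \<le> n \<and> n < block_start \<sigma> y (k + 1)) = k"
    by (rule the_equality) (use assms bs_unique[OF ne] in auto)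
  then show ?thesis by (simp add: subst_ext_def)
qed

lemma bs_agree:
  assumes "\<forall>i\<in>{min 0 k..max 0 k}. length (\<sigma> (y i)) = length (\<sigma> (x i))"
  shows "block_start \<sigma> y k = block_start \<sigma> x k"
        "block_start \<sigma> y (k+1) = block_start \<sigma> x (k+1)"
proof -
  show 1: "block_start \<sigma> y k = block_start \<sigma> x k"
  proof (cases "0 \<le> k")
    case True
    have "(\<Sum>i\<in>{0..<k}. int (length (\<sigma> (y i)))) = (\<Sum>i\<in>{0..<k}. int (length (\<sigma> (x i))))"
      by (rule sum.cong) (use assms True in auto)
    then show ?thesis using True by (simp add: block_start_def)
  next
    case False
    have "(\<Sum>i\<in>{k..<0}. int (length (\<sigma> (y i)))) = (\<Sum>i\<in>{k..<0}. int (length (\<sigma> (x i))))"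
      by (rule sum.cong) (use assms False in auto)
    then show ?thesis using False by (simp add: block_start_def)
  qed
  have "length (\<sigma> (y k)) = length (\<sigma> (x k))" using assms by auto
  then show "block_start \<sigma> y (k+1) = block_start \<sigma> x (k+1)" using 1 bs_step[of \<sigma> y k] bs_step[of \<sigma> x k] by simp
qed

theorem mainTheorem16:
  fixes K :: "'a::metric_space set" and \<sigma> :: "'a \<Rightarrow> 'a list"
  assumes "alphabet_space K"
    and "gen_substitution K \<sigma>"
  shows "continuous_map (full_shift_top K) (full_shift_top K) (subst_ext \<sigma>)"
proof -
  have neK: "\<And>a. a \<in> K \<Longrightarrow> \<sigma> a \<noteq> [] \<and> set (\<sigma> a) \<subseteq> K"
    and lenc: "continuous_on K (\<lambda>a. length (\<sigma> a))"
    and letc: "\<And>j. continuous_on {a\<in>K. j < length (\<sigma> a)} (\<lambda>a. \<sigma> a ! j)"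
    using assms(2) unfolding gen_substitution_def by auto
  define T where "T = product_topology (\<lambda>_::int. top_of_set K) UNIV"
  have top: "topspace T = {x. \<forall>i. x i \<in> K}"
    unfolding T_def by (auto simp: topspace_product_topology PiE_UNIV_domain)
  have proj: "\<And>i V. openin (top_of_set K) V \<Longrightarrow> openin T {y \<in> topspace T. y i \<in> V}"
    unfolding T_def
    by (rule openin_continuous_map_preimage[OF continuous_map_product_projection]) auto
  have lenopen: "\<And>L. openin (top_of_set K) (K \<inter> (\<lambda>a. length (\<sigma> a)) -` {L})"
    by (rule continuous_openin_preimage_gen[OF lenc]) (simp add: open_discrete)
  have gtopen: "\<And>j. openin (top_of_set K) (K \<inter> (\<lambda>a. length (\<sigma> a)) -` {j<..})"
    by (rule continuous_openin_preimage_gen[OF lenc]) simp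
  have ne: "\<And>x. x \<in> topspace T \<Longrightarrow> \<forall>i. \<sigma> (x i) \<noteq> []" using top neK by auto
  have comp: "continuous_map T (top_of_set K) (\<lambda>x. subst_ext \<sigma> x n)" for n
    unfolding continuous_map_def
  proof (intro conjI allI impI)
    show "(\<lambda>x. subst_ext \<sigma> x n) \<in> topspace T \<rightarrow> topspace (top_of_set K)"
    proof
      fix x assume x: "x \<in> topspace T"
      obtain k where k: "block_start \<sigma> x k \<le> n" "n < block_start \<sigma> x (k+1)"
        using bs_exists[OF ne[OF x]] by blast
      have e: "subst_ext \<sigma> x n = \<sigma> (x k) ! nat (n - block_start \<sigma> x k)"
        using subst_eq[OF ne[OF x] k] .
      have "nat (n - block_start \<sigma> x k) < length (\<sigma> (x k))"
        using k bs_step[of \<sigma> x k] by simp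
      then have "\<sigma> (x k) ! nat (n - block_start \<sigma> x k) \<in> set (\<sigma> (x k))" by simp
      then show "subst_ext \<sigma> x n \<in> topspace (top_of_set K)"
        using e neK[of "x k"] x top by auto
    qed
  next
    fix U assume U: "openin (top_of_set K) U"
    show "openin T {x \<in> topspace T. subst_ext \<sigma> x n \<in> U}"
    proof (subst openin_subopen, intro ballI)
      fix x assume xs: "x \<in> {x \<in> topspace T. subst_ext \<sigma> x n \<in> U}"
      then have x: "x \<in> topspace T" by simp
      obtain k where k: "block_start \<sigma> x k \<le> n" "n < block_start \<sigma> x (k+1)"
        using bs_exists[OF ne[OF x]] by blast
      define j where "j = nat (n - block_start \<sigma> x k)"
      have e: "subst_ext \<sigma> x n = \<sigma> (x k) ! j"
        using subst_eq[OF ne[OF x] k] j_def by simp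
      have jl: "j < length (\<sigma> (x k))"
        using k bs_step[of \<sigma> x k] j_def by simp
      define I where "I = {min 0 k..max 0 k}"
      define W0 where "W0 = (\<Inter>i\<in>I. {y \<in> topspace T. y i \<in> K \<inter> (\<lambda>a. length (\<sigma> a)) -` {length (\<sigma> (x i))}})"
      have W0o: "openin T W0" unfolding W0_def
        apply (rule openin_INT2)
        apply (simp add: I_def)
        apply (simp add: I_def)
        by (rule proj[OF lenopen])
      define Sj where "Sj = K \<inter> (\<lambda>a. length (\<sigma> a)) -` {j<..}"
      have Sj_eq: "Sj = {a\<in>K. j < length (\<sigma> a)}" unfolding Sj_def by auto
      obtain T' where T': "open T'" "U = K \<inter> T'" using U openin_open by blast
      define V where "V = Sj \<inter> (\<lambda>a. \<sigma> a ! j) -` T'"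
      have "openin (top_of_set Sj) V" unfolding V_def
        by (rule continuous_openin_preimage_gen) (use letc[of j] Sj_eq T' in auto)
      then have Vo: "openin (top_of_set K) V" using openin_trans gtopen Sj_def by blast
      have VU: "\<And>a. a \<in> V \<Longrightarrow> \<sigma> a ! j \<in> U"
      proof -
        fix a assume "a \<in> V"
        then have "a \<in> K" "j < length (\<sigma> a)" "\<sigma> a ! j \<in> T'" unfolding V_def Sj_eq by auto
        moreover have "\<sigma> a ! j \<in> K" using calculation neK[of a] nth_mem by blast
        ultimately show "\<sigma> a ! j \<in> U" using T' by auto
      qed
      define W where "W = W0 \<inter> {y \<in> topspace T. y k \<in> V}"
      show "\<exists>W. openin T W \<and> x \<in> W \<and> W \<subseteq> {x \<in> topspace T. subst_ext \<sigma> x n \<in> U}"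
      proof (intro exI conjI)
        show "openin T W" unfolding W_def using W0o proj[OF Vo] by blast
        have "x k \<in> V" unfolding V_def Sj_eq using jl x top xs e T' by auto
        then show "x \<in> W" unfolding W_def W0_def using x top by auto
        show "W \<subseteq> {x \<in> topspace T. subst_ext \<sigma> x n \<in> U}"
        proof
          fix y assume y: "y \<in> W"
          then have yt: "y \<in> topspace T" and yV: "y k \<in> V" unfolding W_def by auto
          have agree: "\<forall>i\<in>{min 0 k..max 0 k}. length (\<sigma> (y i)) = length (\<sigma> (x i))"
            using y unfolding W_def W0_def I_def by auto
          note a = bs_agree[OF agree]
          have "subst_ext \<sigma> y n = \<sigma> (y k) ! j"
            using subst_eq[OF ne[OF yt], of k n] k a j_def by simp
          then show "y \<in> {x \<in> topspace T. subst_ext \<sigma> x n \<in> U}" using yt VU[OF yV] by simp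
        qed
      qed
    qed
  qed
  show ?thesis unfolding full_shift_top_def continuous_map_componentwise_UNIV
    using comp T_def by simp
qed
end
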